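(* Let $A$ be an invertible $n$-by-$n$ doubly nonnegative matrix with sign change matrix $W=[w_{ij}]$. For indices $i,j$ let $T^-_{ij}=\{t>1:(A^t)_{ij}<0\}$. Then the number of connected components of $T^-_{ij}$ is at most $\lfloor (w_{ij}-1)/2\rfloor$ if $w_{ij}>0$, and is $0$ if $w_{ij}=0$.
   Context: A real matrix is doubly nonnegative if it is symmetric, positive semidefinite, and entry-wise nonnegative. Write $A=UDU^T$ with $U=[u_{ij}]$ real orthogonal and $D=\mathrm{diag}(\lambda_1,\dots,\lambda_n)$, $\lambda_1\ge\cdots\ge\lambda_n$; for real $t$ (here $\lambda_i>0$), $A^t=UD^tU^T$, so $(A^t)_{ij}=\sum_k u_{ik}u_{jk}\lambda_k^t$ is an exponential polynomial in $t$. The sign change matrix $W=[w_{ij}]$ has $w_{ij}$ equal to the number of sign changes in the coefficient sequence $(u_{i1}u_{j1},\dots,u_{in}u_{jn})$, arranged in decreasing order of the corresponding eigenvalues (zeros ignored). *)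

theory Defs
  imports "HOL-Analysis.Analysis"
begin

text \<open>Real n-by-n matrices are represented as functions nat => nat => real,
  only the entries with indices below n being relevant.\<close>

definition symmetric_matrix :: "nat \<Rightarrow> (nat \<Rightarrow> nat \<Rightarrow> real) \<Rightarrow> bool" where
  "symmetric_matrix n A \<longleftrightarrow> (\<forall>i<n. \<forall>j<n. A i j = A j i)"

definition psd_matrix :: "nat \<Rightarrow> (nat \<Rightarrow> nat \<Rightarrow> real) \<Rightarrow> bool" where
  "psd_matrix n A \<longleftrightarrow> symmetric_matrix n A \<and>
     (\<forall>x :: nat \<Rightarrow> real. (\<Sum>i<n. \<Sum>j<n. x i * A i j * x j) \<ge> 0)"

definition entrywise_nonneg :: "nat \<Rightarrow> (nat \<Rightarrow> nat \<Rightarrow> real) \<Rightarrow> bool" where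
  "entrywise_nonneg n A \<longleftrightarrow> (\<forall>i<n. \<forall>j<n. A i j \<ge> 0)"

definition doubly_nonnegative :: "nat \<Rightarrow> (nat \<Rightarrow> nat \<Rightarrow> real) \<Rightarrow> bool" where
  "doubly_nonnegative n A \<longleftrightarrow> symmetric_matrix n A \<and> psd_matrix n A \<and> entrywise_nonneg n A"

definition mat_mult :: "nat \<Rightarrow> (nat \<Rightarrow> nat \<Rightarrow> real) \<Rightarrow> (nat \<Rightarrow> nat \<Rightarrow> real) \<Rightarrow> nat \<Rightarrow> nat \<Rightarrow> real" where
  "mat_mult n A B = (\<lambda>i j. \<Sum>k<n. A i k * B k j)"

definition invertible_matrix :: "nat \<Rightarrow> (nat \<Rightarrow> nat \<Rightarrow> real) \<Rightarrow> bool" where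
  "invertible_matrix n A \<longleftrightarrow> (\<exists>B. \<forall>i<n. \<forall>j<n.
      mat_mult n A B i j = (if i = j then 1 else 0) \<and> mat_mult n B A i j = (if i = j then 1 else 0))"

definition orthogonal_matrix :: "nat \<Rightarrow> (nat \<Rightarrow> nat \<Rightarrow> real) \<Rightarrow> bool" where
  "orthogonal_matrix n U \<longleftrightarrow> (\<forall>i<n. \<forall>j<n.
      (\<Sum>k<n. U k i * U k j) = (if i = j then 1 else 0) \<and>
      (\<Sum>k<n. U i k * U j k) = (if i = j then 1 else 0))"

fun sign_changes_nz :: "real list \<Rightarrow> nat" where
  "sign_changes_nz (x # y # zs) = (if x * y < 0 then 1 else 0) + sign_changes_nz (y # zs)"
| "sign_changes_nz _ = 0"

definition sign_changes :: "real list \<Rightarrow> nat" where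
  "sign_changes xs = sign_changes_nz (filter (\<lambda>x. x \<noteq> 0) xs)"

text \<open>Entry (i,j) of the sign change matrix w.r.t. the decomposition A = U D U^T,
  where the eigenvalues lambda 0 >= ... >= lambda (n-1) are in decreasing order.\<close>
definition sign_change_entry :: "nat \<Rightarrow> (nat \<Rightarrow> nat \<Rightarrow> real) \<Rightarrow> nat \<Rightarrow> nat \<Rightarrow> nat" where
  "sign_change_entry n U i j = sign_changes (map (\<lambda>k. U i k * U j k) [0..<n])"

text \<open>Entry (i,j) of A^t = U D^t U^T.\<close>
definition mat_real_power_entry ::
  "nat \<Rightarrow> (nat \<Rightarrow> nat \<Rightarrow> real) \<Rightarrow> (nat \<Rightarrow> real) \<Rightarrow> real \<Rightarrow> nat \<Rightarrow> nat \<Rightarrow> real" where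
  "mat_real_power_entry n U lam t i j = (\<Sum>k<n. U i k * U j k * lam k powr t)"

end

theory Submission
  imports Defs
begin


fun vc :: "real \<Rightarrow> real list \<Rightarrow> nat" where
  "vc s [] = 0"
| "vc s (x # xs) = (if x = 0 then vc s xs else (if s * x < 0 then 1 else 0) + vc x xs)"

fun lastnz :: "real \<Rightarrow> real list \<Rightarrow> real" where
  "lastnz s [] = s"
| "lastnz s (x # xs) = lastnz (if x = 0 then s else x) xs"

lemma vc_snz: "s \<noteq> 0 \<Longrightarrow> vc s xs = sign_changes_nz (s # filter (\<lambda>x. x \<noteq> 0) xs)"
  by (induction xs arbitrary: s) auto

lemma vc0: "vc 0 xs = sign_changes xs"
  unfolding sign_changes_def by (induction xs) (auto simp: vc_snz)

lemma vc_append: "vc s (xs @ ys) = vc s xs + vc (lastnz s xs) ys"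
  by (induction xs arbitrary: s) auto

lemma mult_neg_sgn: "(a * b < (0::real)) = (sgn a * sgn b < 0)"
  by (auto simp: sgn_if mult_less_0_iff)

lemma vc_sgn: "list_all2 (\<lambda>a b. sgn a = sgn b) xs ys \<Longrightarrow> sgn s = sgn s' \<Longrightarrow> vc s xs = vc s' ys"
proof (induction xs ys arbitrary: s s' rule: list_all2_induct)
  case Nil then show ?case by simp
next
  case (Cons x xs y ys)
  have z: "x = 0 \<longleftrightarrow> y = 0" using Cons(1) by (metis sgn_eq_0_iff)
  have m: "s * x < 0 \<longleftrightarrow> s' * y < 0" unfolding mult_neg_sgn[of s x] mult_neg_sgn[of s' y] using Cons(1,4) by simp
  show ?case using Cons z m by auto
qed

lemma lastnz_sgn: "list_all2 (\<lambda>a b. sgn a = sgn b) xs ys \<Longrightarrow> sgn s = sgn s' \<Longrightarrow> sgn (lastnz s xs) = sgn (lastnz s' ys)"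
proof (induction xs ys arbitrary: s s' rule: list_all2_induct)
  case Nil then show ?case by simp
next
  case (Cons x xs y ys)
  have z: "x = 0 \<longleftrightarrow> y = 0" using Cons(1) by (metis sgn_eq_0_iff)
  show ?case
  proof (cases "x = 0")
    case True
    then show ?thesis using Cons.IH[of s s'] Cons.prems z by simp
  next
    case False
    then show ?thesis using Cons.IH[of x y] Cons.hyps z by simp
  qed
qed

lemma vc_uminus: "vc (-s) (map uminus xs) = vc s xs"
  by (induction xs arbitrary: s) (auto simp: mult.commute)

lemma vc_state: "x \<noteq> 0 \<Longrightarrow> vc t ys \<le> vc x ys + (if t * x < 0 then 1 else 0)"
proof (induction ys arbitrary: t x)
  case Nil then show ?case by simp
next
  case (Cons y ys)
  show ?case
  proof (cases "y = 0")
    case True then show ?thesis using Cons by simp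
  next
    case False
    have "t * y < 0 \<Longrightarrow> t * x < 0 \<or> x * y < 0"
    proof (rule ccontr)
      assume a: "t * y < 0" "\<not> (t * x < 0 \<or> x * y < 0)"
      then have ge: "(t*x) * (x*y) \<ge> 0" by (simp add: not_less)
      have "x*x > 0" using Cons(2) by (metis not_real_square_gt_zero)
      moreover have "(t*x)*(x*y) = (t*y)*(x*x)" by (simp add: algebra_simps)
      moreover have "(t*y)*(x*x) < 0" using a(1) \<open>x*x > 0\<close> by (rule mult_neg_pos)
      ultimately show False using ge by linarith
    qed
    then show ?thesis using False by auto
  qed
qed

lemma vc_state0: "vc 0 ys \<le> vc x ys"
  using vc_state[of x 0 ys] by (cases "x = 0") auto

lemma vc_le0: "vc t ys \<le> vc 0 ys + 1"
  by (induction ys arbitrary: t) auto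

lemma vc_del: "vc t ys \<le> vc t (x # ys)"
  using vc_state[of x t ys] by auto

lemma vc_sgn1: "sgn a = sgn b \<Longrightarrow> vc a ys = vc b ys"
  by (rule vc_sgn) (auto simp: list_all2_refl)

lemma vc_merge: "vc t ((a+b) # ys) \<le> vc t (a # b # ys)"
proof -
  have disj: "a+b = 0 \<or> (a+b \<noteq> 0 \<and> sgn(a+b) = sgn a) \<or> (a+b \<noteq> 0 \<and> sgn (a+b) = sgn b)"
    by (auto simp: sgn_if split: if_splits)
  consider "a + b = 0" | "a + b \<noteq> 0" "sgn (a+b) = sgn a" | "a + b \<noteq> 0" "sgn (a+b) = sgn b"
    using disj by blast
  then show ?thesis
  proof cases
    case 1
    then show ?thesis using vc_del[of t ys b] vc_del[of t "b # ys" a] by simp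
  next
    case 2
    then have a0: "a \<noteq> 0" by (auto simp: sgn_eq_0_iff)
    have "vc t ((a+b) # ys) = (if t * (a+b) < 0 then 1 else 0) + vc (a+b) ys" using 2 by simp
    also have "\<dots> = (if t * a < 0 then 1 else 0) + vc a ys"
      using 2 vc_sgn1[OF 2(2)] mult_neg_sgn[of t "a+b"] mult_neg_sgn[of t a] by simp
    also have "\<dots> \<le> (if t * a < 0 then 1 else 0) + vc a (b # ys)" using vc_del by simp
    finally show ?thesis using a0 by simp
  next
    case 3
    then have b0: "b \<noteq> 0" by (auto simp: sgn_eq_0_iff)
    have "vc t ((a+b) # ys) = (if t * (a+b) < 0 then 1 else 0) + vc (a+b) ys" using 3 by simp
    also have "\<dots> = vc t (b # ys)"
      using 3 b0 vc_sgn1[OF 3(2)] mult_neg_sgn[of t "a+b"] mult_neg_sgn[of t b] by simp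
    also have "\<dots> \<le> vc t (a # b # ys)" by (rule vc_del)
    finally show ?thesis .
  qed
qed

lemma vc_split_exists:
  "1 \<le> vc s (map fst xs) \<Longrightarrow> \<exists>as p bs. xs = as @ p # bs \<and> fst p \<noteq> 0 \<and> lastnz s (map fst as) * fst p < 0"
proof (induction xs arbitrary: s)
  case Nil then show ?case by simp
next
  case (Cons x xs)
  show ?case
  proof (cases "fst x = 0")
    case True
    then have "1 \<le> vc s (map fst xs)" using Cons.prems by simp
    then obtain as p bs where "xs = as @ p # bs" "fst p \<noteq> 0" "lastnz s (map fst as) * fst p < 0"
      using Cons.IH by blast
    then show ?thesis using True by (intro exI[of _ "x # as"]) auto
  next
    case False
    show ?thesis
    proof (cases "s * fst x < 0")
      case True
      then show ?thesis using False by (intro exI[of _ "[]"]) auto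
    next
      case nn: False
      then have "1 \<le> vc (fst x) (map fst xs)" using Cons.prems False by simp
      then obtain as p bs where "xs = as @ p # bs" "fst p \<noteq> 0" "lastnz (fst x) (map fst as) * fst p < 0"
        using Cons.IH by blast
      then show ?thesis using False by (intro exI[of _ "x # as"]) auto
    qed
  qed
qed

lemma vc_zero_pos: "vc s cs = 0 \<Longrightarrow> s > 0 \<Longrightarrow> \<forall>c\<in>set cs. c \<ge> 0"
proof (induction cs arbitrary: s)
  case Nil then show ?case by simp
next
  case (Cons x xs)
  show ?case
  proof (cases "x = 0")
    case True then show ?thesis using Cons by auto
  next
    case False
    then have "\<not> s * x < 0" "vc x xs = 0" using Cons(2) by (auto split: if_splits)
    then have "x > 0" using Cons(3) False by (metis linorder_neqE_linordered_idom mult_pos_neg)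
    then show ?thesis using Cons(1)[OF \<open>vc x xs = 0\<close>] by auto
  qed
qed

lemma vc_zero_neg: "vc s cs = 0 \<Longrightarrow> s < 0 \<Longrightarrow> \<forall>c\<in>set cs. c \<le> 0"
proof (induction cs arbitrary: s)
  case Nil then show ?case by simp
next
  case (Cons x xs)
  show ?case
  proof (cases "x = 0")
    case True then show ?thesis using Cons by auto
  next
    case False
    then have "\<not> s * x < 0" "vc x xs = 0" using Cons(2) by (auto split: if_splits)
    then have "x < 0" using Cons(3) False by (metis linorder_neqE_linordered_idom mult_neg_pos)
    then show ?thesis using Cons(1)[OF \<open>vc x xs = 0\<close>] by auto
  qed
qed

lemma vc_zero: "vc 0 cs = 0 \<Longrightarrow> (\<forall>c\<in>set cs. c \<ge> 0) \<or> (\<forall>c\<in>set cs. c \<le> 0)"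
proof (induction cs)
  case Nil then show ?case by simp
next
  case (Cons x xs)
  show ?case
  proof (cases "x = 0")
    case True then show ?thesis using Cons by auto
  next
    case False
    then have v: "vc x xs = 0" using Cons(2) by simp
    show ?thesis
    proof (cases "x > 0")
      case True then show ?thesis using vc_zero_pos[OF v] by auto
    next
      case f: False then have "x < 0" using False by auto
      then show ?thesis using vc_zero_neg[OF v] by auto
    qed
  qed
qed

lemma lastnz_nz: "s \<noteq> 0 \<Longrightarrow> lastnz s cs \<noteq> 0"
  by (induction cs arbitrary: s) auto

lemma lastnz_indep: "(\<exists>c\<in>set cs. c \<noteq> 0) \<Longrightarrow> lastnz s cs = lastnz t cs"
proof (induction cs arbitrary: s t)
  case Nil then show ?case by simp
next
  case (Cons x xs)
  show ?case
  proof (cases "x = 0")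
    case True then show ?thesis using Cons by auto
  next
    case False then show ?thesis by simp
  qed
qed

lemma vc_parity: "s \<noteq> 0 \<Longrightarrow> even (vc s cs) \<longleftrightarrow> lastnz s cs * s > 0"
proof (induction cs arbitrary: s)
  case Nil
  have "0 < s * s" using Nil by (metis linorder_neqE_linordered_idom mult_pos_pos mult_neg_neg)
  then show ?case by simp
next
  case (Cons x xs)
  show ?case
  proof (cases "x = 0")
    case True then show ?thesis using Cons by auto
  next
    case False
    let ?L = "lastnz x xs"
    have L: "?L \<noteq> 0" using lastnz_nz False by auto
    have IH: "even (vc x xs) \<longleftrightarrow> ?L * x > 0" using Cons(1) False by auto
    have e: "lastnz s (x # xs) = ?L" using False by simp
    have hx: "\<And>a b c. a \<noteq> 0 \<Longrightarrow> b \<noteq> 0 \<Longrightarrow> c \<noteq> (0::real) \<Longrightarrow> (a*b > 0) = ((a*c>0) = (b*c>0))"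
      by (auto simp: zero_less_mult_iff)
    have key: "(y0 * s > 0) = ((y0 * x > 0) = (s * x > 0))" if "y0 \<noteq> 0" for y0
      using hx[OF that Cons(2) False] .
    have sx: "s * x < 0 \<longleftrightarrow> \<not> s * x > 0" using Cons(2) False
      by (metis linorder_neqE_linordered_idom mult_eq_0_iff not_less_iff_gr_or_eq)
    have "vc s (x # xs) = (if s * x < 0 then 1 else 0) + vc x xs" using False by simp
    then show ?thesis
      using IH e key[OF L] sx by auto
  qed
qed



definition ef :: "(real \<times> real) list \<Rightarrow> real \<Rightarrow> real" where
  "ef xs t = (\<Sum>p\<leftarrow>xs. fst p * exp (snd p * t))"

lemma ef_Nil[simp]: "ef [] t = 0" by (simp add: ef_def)
lemma ef_Cons[simp]: "ef (p # xs) t = fst p * exp (snd p * t) + ef xs t" by (simp add: ef_def)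
lemma ef_append[simp]: "ef (xs @ ys) t = ef xs t + ef ys t" by (simp add: ef_def)

definition dl :: "(real \<times> real) list \<Rightarrow> (real \<times> real) list" where
  "dl xs = map (\<lambda>p. (fst p * snd p, snd p)) xs"

lemma ef_deriv: "(ef xs has_real_derivative ef (dl xs) t) (at t)"
proof (induction xs)
  case Nil
  have e: "ef [] = (\<lambda>t. 0)" by (rule ext) simp
  show ?case unfolding e by (simp add: dl_def)
next
  case (Cons p xs)
  have e: "ef (p # xs) = (\<lambda>t. fst p * exp (snd p * t) + ef xs t)" by (rule ext) simp
  show ?case unfolding e using Cons
    by (auto intro!: derivative_eq_intros simp: dl_def)
qed

lemma ef_cont: "continuous_on S (ef xs)"
  by (meson DERIV_continuous continuous_at_imp_continuous_on ef_deriv)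

definition shift :: "real \<Rightarrow> (real \<times> real) list \<Rightarrow> (real \<times> real) list" where
  "shift m xs = map (\<lambda>p. (fst p, snd p - m)) xs"

lemma ef_shift: "ef xs t = exp (m * t) * ef (shift m xs) t"
proof (induction xs)
  case Nil then show ?case by (simp add: shift_def)
next
  case (Cons p xs)
  have "exp (snd p * t) = exp (m * t) * exp ((snd p - m) * t)"
    by (simp add: exp_add[symmetric] algebra_simps)
  then show ?case using Cons by (simp add: shift_def algebra_simps)
qed

lemma rolle_count:
  assumes der: "\<And>t. (g has_real_derivative g' t) (at t)"
  shows "finite Z \<Longrightarrow> card Z = Suc N \<Longrightarrow> \<forall>z\<in>Z. g z = 0 \<Longrightarrow>
    \<exists>Z'. finite Z' \<and> card Z' = N \<and> (\<forall>z\<in>Z'. g' z = 0) \<and> (\<forall>z\<in>Z'. z < Max Z)"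
proof (induction N arbitrary: Z)
  case 0
  then show ?case by (intro exI[of _ "{}"]) auto
next
  case (Suc N)
  define M where "M = Max Z"
  define Z0 where "Z0 = Z - {M}"
  have ne: "Z \<noteq> {}" using Suc.prems by auto
  have MZ: "M \<in> Z" using Suc.prems ne M_def by simp
  have cZ0: "card Z0 = Suc N" using Suc.prems MZ Z0_def by simp
  have fZ0: "finite Z0" using Suc.prems Z0_def by simp
  have ne0: "Z0 \<noteq> {}" using cZ0 by auto
  obtain Z0' where Z0': "finite Z0'" "card Z0' = N" "\<forall>z\<in>Z0'. g' z = 0" "\<forall>z\<in>Z0'. z < Max Z0"
    using Suc.IH[OF fZ0 cZ0] Suc.prems(3) Z0_def by auto
  define m where "m = Max Z0"
  have mZ0: "m \<in> Z0" using fZ0 ne0 m_def by simp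
  have "m \<le> M" using mZ0 Z0_def M_def Suc.prems(1) by simp
  moreover have "m \<noteq> M" using mZ0 Z0_def by simp
  ultimately have mM: "m < M" by simp
  have gm: "g m = 0" "g M = 0" using mZ0 MZ Suc.prems(3) Z0_def by auto
  have "\<exists>z. m < z \<and> z < M \<and> DERIV g z :> 0"
  proof (rule Rolle[OF mM])
    show "g m = g M" using gm by simp
    show "continuous_on {m..M} g"
      by (meson DERIV_continuous continuous_at_imp_continuous_on der)
    show "\<And>x. m < x \<Longrightarrow> x < M \<Longrightarrow> g differentiable (at x)"
      using der real_differentiable_def by blast
  qed
  then obtain \<xi> where xi: "m < \<xi>" "\<xi> < M" "DERIV g \<xi> :> 0" by blast
  have gxi: "g' \<xi> = 0" using DERIV_unique[OF der xi(3)] .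
  have nin: "\<xi> \<notin> Z0'" using Z0'(4) xi(1) m_def by force
  show ?case
  proof (intro exI[of _ "insert \<xi> Z0'"] conjI)
    show "finite (insert \<xi> Z0')" using Z0' by simp
    show "card (insert \<xi> Z0') = Suc N" using Z0' nin by simp
    show "\<forall>z\<in>insert \<xi> Z0'. g' z = 0" using Z0' gxi by simp
    show "\<forall>z\<in>insert \<xi> Z0'. z < Max Z" using Z0'(4) xi mM m_def M_def by force
  qed
qed

lemma ef_zero_nonneg:
  assumes "\<forall>c\<in>set (map fst xs). c \<ge> 0" "ef xs z = 0"
  shows "\<forall>p\<in>set xs. fst p = 0"
  using assms
proof (induction xs)
  case Nil then show ?case by simp
next
  case (Cons p xs)
  have nn: "ef xs z \<ge> 0" if "\<forall>c\<in>set (map fst xs). c \<ge> 0" for xs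
    using that by (induction xs) (auto intro!: add_nonneg_nonneg)
  have a: "fst p * exp (snd p * z) \<ge> 0" using Cons.prems by simp
  have b: "ef xs z \<ge> 0" apply (rule nn) using Cons.prems(1) by simp
  have e: "fst p * exp (snd p * z) + ef xs z = 0" using Cons.prems(2) by simp
  have c: "fst p * exp (snd p * z) = 0" using a b e by linarith
  have d: "ef xs z = 0" using a b e by linarith
  have "fst p = 0" using c by simp
  moreover have pr: "\<forall>c\<in>set (map fst xs). c \<ge> 0" using Cons.prems(1) by simp
  moreover have "\<forall>p\<in>set xs. fst p = 0" using Cons.IH[OF pr d] .
  ultimately show ?case by simp
qed

lemma ef_neg: "ef (map (\<lambda>p. (- fst p, snd p)) xs) t = - ef xs t"
  by (induction xs) auto

lemma ef_allzero: "\<forall>p\<in>set xs. fst p = 0 \<Longrightarrow> ef xs t = 0"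
  by (induction xs) auto



lemma vc_flip:
  assumes pos: "\<forall>r\<in>set as. f r > 0" and neg: "\<forall>r\<in>set (p#bs). f r < 0"
    and p0: "fst p \<noteq> 0" and ch: "lastnz 0 (map fst as) * fst p < 0"
  shows "vc 0 (map (\<lambda>r. fst r * f r) (as @ p # bs)) + 1 = vc 0 (map fst (as @ p # bs))"
proof -
  define A' where "A' = map (\<lambda>r. fst r * f r) as"
  define P' where "P' = fst p * f p"
  define B' where "B' = map (\<lambda>r. fst r * f r) bs"
  define L where "L = lastnz 0 (map fst as)"
  define L' where "L' = lastnz 0 A'"
  have fp: "f p < 0" using neg by simp
  have la: "list_all2 (\<lambda>a b. sgn a = sgn b) A' (map fst as)"
    unfolding A'_def list_all2_map1 list_all2_map2
    by (rule list.rel_refl_strong) (use pos in \<open>auto simp: sgn_mult\<close>)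
  have lb: "list_all2 (\<lambda>a b. sgn a = sgn b) (map uminus B') (map fst bs)"
    unfolding B'_def list_all2_map1 list_all2_map2
    by (rule list.rel_refl_strong) (use neg in \<open>auto simp: sgn_mult\<close>)
  have sL: "sgn L' = sgn L" unfolding L'_def L_def using lastnz_sgn[OF la] by simp
  have P'0: "P' \<noteq> 0" using p0 fp P'_def by simp
  have sP: "sgn (- P') = sgn (fst p)" using fp P'_def by (simp add: sgn_mult)
  have "\<not> L' * P' < 0"
  proof -
    have sP': "sgn (fst p) = - sgn P'" using sP by (simp add: sgn_minus)
    have "sgn (L' * P') = - sgn (L * fst p)" by (simp add: sgn_mult sL sP')
    also have "\<dots> = 1" using sgn_neg[OF ch] L_def by simp
    finally show ?thesis by (metis sgn_less one_neq_neg_one not_less_iff_gr_or_eq sgn_if zero_neq_one)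
  qed
  then have e1: "vc L' (P' # B') = vc P' B'" using P'0 by simp
  have e2: "vc P' B' = vc (fst p) (map fst bs)"
    using vc_uminus[of P' B'] vc_sgn[OF lb sP] by simp
  have e3: "vc 0 A' = vc 0 (map fst as)" using vc_sgn[OF la] by simp
  have "vc 0 (map (\<lambda>r. fst r * f r) (as @ p # bs)) = vc 0 A' + vc L' (P' # B')"
    by (simp add: A'_def P'_def B'_def L'_def vc_append)
  moreover have "vc 0 (map fst (as @ p # bs)) = vc 0 (map fst as) + 1 + vc (fst p) (map fst bs)"
    using ch p0 by (simp add: vc_append)
  ultimately show ?thesis using e1 e2 e3 by simp
qed

lemma descartes:
  assumes "sorted_wrt (\<ge>) (map snd xs)" "finite Z" "vc 0 (map fst xs) < card Z" "\<forall>z\<in>Z. ef xs z = 0"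
  shows "ef xs t = 0"
  using assms
proof (induction "length xs + vc 0 (map fst xs)" arbitrary: xs Z t rule: less_induct)
  case less
  note srt = less.prems(1) and fin = less.prems(2) and cz = less.prems(3) and zz = less.prems(4)
  show ?case
  proof (cases "vc 0 (map fst xs) = 0")
    case True
    obtain z where z: "z \<in> Z" using cz by (metis card.empty ex_in_conv less_nat_zero_code)
    from vc_zero[OF True] consider "\<forall>c\<in>set (map fst xs). c \<ge> 0" | "\<forall>c\<in>set (map fst xs). c \<le> 0"
      by blast
    then show ?thesis
    proof cases
      case 1
      have "ef xs z = 0" using zz z by blast
      then have "\<forall>p\<in>set xs. fst p = 0" using ef_zero_nonneg 1 by blast
      then show ?thesis by (rule ef_allzero)
    next
      case 2
      let ?ys = "map (\<lambda>p. (- fst p, snd p)) xs"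
      have a: "\<forall>c\<in>set (map fst ?ys). c \<ge> 0" using 2 by auto
      have "ef xs z = 0" using zz z by blast
      then have b: "ef ?ys z = 0" by (simp add: ef_neg)
      have "\<forall>p\<in>set ?ys. fst p = 0" using ef_zero_nonneg[OF a b] .
      then have "\<forall>p\<in>set xs. fst p = 0" by auto
      then show ?thesis by (rule ef_allzero)
    qed
  next
    case False
    then have "1 \<le> vc 0 (map fst xs)" by simp
    then obtain as p bs where sp: "xs = as @ p # bs" "fst p \<noteq> 0" "lastnz 0 (map fst as) * fst p < 0"
      using vc_split_exists by blast
    have "as \<noteq> []" using sp(3) by auto
    then obtain as0 q where asq: "as = as0 @ [q]" by (metis rev_exhaust)
    have xs_eq: "xs = as0 @ q # p # bs" using sp asq by simp
    show ?thesis
    proof (cases "snd q = snd p")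
      case True
      define xs' where "xs' = as0 @ (fst q + fst p, snd p) # bs"
      have len: "length xs' < length xs" using xs_eq xs'_def by simp
      have m: "vc (lastnz 0 (map fst as0)) ((fst q + fst p) # map fst bs)
             \<le> vc (lastnz 0 (map fst as0)) (fst q # fst p # map fst bs)" by (rule vc_merge)
      have V: "vc 0 (map fst xs') \<le> vc 0 (map fst xs)"
        using m unfolding xs_eq xs'_def by (simp add: vc_append)
      have efe: "ef xs' s = ef xs s" for s using xs_eq xs'_def True by (simp add: algebra_simps)
      have srt': "sorted_wrt (\<ge>) (map snd xs')" using srt True unfolding xs_eq xs'_def
        by (simp add: sorted_wrt_append)
      have zz': "\<forall>z\<in>Z. ef xs' z = 0" using zz efe by simp
      have "ef xs' t = 0"
        by (rule less.hyps[OF _ srt' fin _ zz']) (use len V cz in auto)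
      then show ?thesis using efe by simp
    next
      case False
      have "snd p \<le> snd q" using srt unfolding xs_eq by (simp add: sorted_wrt_append)
      then have qp: "snd p < snd q" using False by simp
      define \<mu> where "\<mu> = (snd q + snd p) / 2"
      have asbig: "\<forall>r\<in>set as. snd r - \<mu> > 0"
      proof
        fix r assume r: "r \<in> set as"
        have "snd q \<le> snd r" using r srt unfolding xs_eq asq by (auto simp: sorted_wrt_append)
        then show "snd r - \<mu> > 0" using qp \<mu>_def by simp
      qed
      have bssmall: "\<forall>r\<in>set (p # bs). snd r - \<mu> < 0"
      proof
        fix r assume r: "r \<in> set (p # bs)"
        have "snd r \<le> snd p" using r srt unfolding xs_eq by (auto simp: sorted_wrt_append)
        then show "snd r - \<mu> < 0" using qp \<mu>_def by simp
      qed
      define ys where "ys = shift \<mu> xs"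
      define ds where "ds = dl ys"
      have zy: "\<forall>z\<in>Z. ef ys z = 0"
      proof
        fix z assume "z \<in> Z"
        then have "ef xs z = 0" using zz by blast
        then show "ef ys z = 0" using ef_shift[of xs z \<mu>] ys_def by simp
      qed
      obtain N where N: "card Z = Suc N" using cz by (metis Suc_pred' less_nat_zero_code not_gr_zero)
      obtain Z' where Z': "finite Z'" "card Z' = N" "\<forall>z\<in>Z'. ef ds z = 0"
        using rolle_count[OF ef_deriv fin N zy] ds_def by blast
      have fds: "map fst ds = map (\<lambda>r. fst r * (snd r - \<mu>)) xs"
        by (simp add: ds_def ys_def dl_def shift_def)
      have Vds: "vc 0 (map fst ds) + 1 = vc 0 (map fst xs)"
        unfolding fds using vc_flip[OF asbig bssmall sp(2) sp(3)] sp(1) by simp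
      have lds: "length ds = length xs" by (simp add: ds_def ys_def dl_def shift_def)
      have srtd: "sorted_wrt (\<ge>) (map snd ds)" using srt
        by (simp add: ds_def ys_def dl_def shift_def sorted_wrt_map)
      have d0: "ef ds s = 0" for s
        by (rule less.hyps[OF _ srtd Z'(1) _ Z'(3)]) (use Vds lds N cz Z'(2) in auto)
      have "\<forall>x. DERIV (ef ys) x :> 0"
        using ef_deriv[of ys] d0 ds_def by simp
      then have "ef ys t = ef ys (SOME z. z \<in> Z)" by (rule DERIV_isconst_all)
      also have "\<dots> = 0"
        using zy N by (metis card.empty ex_in_conv nat.distinct(1) someI_ex)
      finally show ?thesis using ef_shift[of xs t \<mu>] ys_def by simp
    qed
  qed
qed



lemma alt_zeros:
  fixes g :: "real \<Rightarrow> real"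
  assumes cont: "continuous_on UNIV g"
  shows "finite P \<Longrightarrow> card P = m \<Longrightarrow> (\<forall>p\<in>P. g p < 0) \<Longrightarrow> (\<forall>p\<in>P. a < p) \<Longrightarrow> g a > 0 \<Longrightarrow>
    (\<forall>p\<in>P. \<forall>q\<in>P. p < q \<longrightarrow> (\<exists>r. p < r \<and> r < q \<and> g r > 0)) \<Longrightarrow> (\<forall>p\<in>P. p < K) \<Longrightarrow> g K > 0 \<Longrightarrow>
    \<exists>Z. finite Z \<and> card Z = 2*m \<and> Z \<subseteq> {a<..<K} \<and> (\<forall>z\<in>Z. g z = 0)"
proof (induction m arbitrary: P K)
  case 0
  then show ?case by (intro exI[of _ "{}"]) auto
next
  case (Suc m)
  define q where "q = Max P"
  define P0 where "P0 = P - {q}"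
  have ne: "P \<noteq> {}" using Suc.prems by auto
  have qP: "q \<in> P" using Suc.prems(1) ne q_def by simp
  have cP0: "card P0 = m" using Suc.prems(1,2) qP P0_def by simp
  have fP0: "finite P0" using Suc.prems(1) P0_def by simp
  have P0le: "\<forall>p\<in>P0. p < q"
  proof
    fix p assume p: "p \<in> P0"
    then have "p \<le> q" using Suc.prems(1) q_def P0_def by simp
    moreover have "p \<noteq> q" using p P0_def by simp
    ultimately show "p < q" by simp
  qed
  have gq: "g q < 0" "a < q" "q < K" using qP Suc.prems by auto
  obtain r where r: "a \<le> r" "r < q" "g r > 0" "\<forall>p\<in>P0. p < r"
  proof (cases "P0 = {}")
    case True
    then show ?thesis using that[of a] gq Suc.prems(5) by auto
  next
    case False
    define m0 where "m0 = Max P0"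
    have m0P: "m0 \<in> P0" using fP0 False m0_def by simp
    have "m0 < q" using P0le m0P by simp
    moreover have "m0 \<in> P" "q \<in> P" using m0P P0_def qP by auto
    ultimately obtain r where "m0 < r" "r < q" "g r > 0" using Suc.prems(6) by blast
    moreover have "\<forall>p\<in>P0. p < r" using \<open>m0 < r\<close> fP0 m0_def by (meson Max_ge le_less_trans)
    moreover have "a < m0" using m0P P0_def Suc.prems(4) by auto
    ultimately show ?thesis using that[of r] by auto
  qed
  obtain Z0 where Z0: "finite Z0" "card Z0 = 2*m" "Z0 \<subseteq> {a<..<r}" "\<forall>z\<in>Z0. g z = 0"
  proof -
    have "\<exists>Z. finite Z \<and> card Z = 2*m \<and> Z \<subseteq> {a<..<r} \<and> (\<forall>z\<in>Z. g z = 0)"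
    proof (rule Suc.IH[OF fP0 cP0])
      show "\<forall>p\<in>P0. g p < 0" "\<forall>p\<in>P0. a < p" using Suc.prems P0_def by auto
      show "0 < g a" using Suc.prems by simp
      show "\<forall>p\<in>P0. \<forall>q\<in>P0. p < q \<longrightarrow> (\<exists>r. p < r \<and> r < q \<and> 0 < g r)"
        using Suc.prems(6) P0_def by auto
      show "\<forall>p\<in>P0. p < r" "0 < g r" using r by auto
    qed
    then show ?thesis using that by blast
  qed
  have c: "continuous_on {x..y} g" for x y using cont continuous_on_subset by blast
  obtain z1 where z1: "r \<le> z1" "z1 \<le> q" "g z1 = 0"
    using IVT2'[of g q 0 r, OF _ _ _ c] gq r by auto
  obtain z2 where z2: "q \<le> z2" "z2 \<le> K" "g z2 = 0"
    using IVT'[of g q 0 K, OF _ _ _ c] gq Suc.prems(8) by auto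
  have z1s: "r < z1" "z1 < q" using z1 r gq by (auto simp: order.order_iff_strict)
  have z2s: "q < z2" "z2 < K" using z2 gq Suc.prems(8) by (auto simp: order.order_iff_strict)
  have nz: "z1 \<notin> Z0" "z2 \<notin> Z0" using Z0(3) z1s z2s r by auto
  show ?case
  proof (intro exI[of _ "insert z1 (insert z2 Z0)"] conjI)
    show "finite (insert z1 (insert z2 Z0))" using Z0 by simp
    show "card (insert z1 (insert z2 Z0)) = 2 * Suc m" using Z0 nz z1s z2s by simp
    show "insert z1 (insert z2 Z0) \<subseteq> {a<..<K}" using Z0(3) z1s z2s r gq by auto
    show "\<forall>z\<in>insert z1 (insert z2 Z0). g z = 0" using Z0 z1 z2 by auto
  qed
qed

lemma ef_update: "k < length xs \<Longrightarrow>
  ef (xs[k := p']) t = ef xs t - fst (xs!k) * exp (snd (xs!k) * t) + fst p' * exp (snd p' * t)"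
proof (induction xs arbitrary: k)
  case Nil then show ?case by simp
next
  case (Cons x xs) then show ?case by (cases k) auto
qed

lemma sorted_le_hd: fixes xs :: "(real \<times> real) list" shows "sorted_wrt (\<ge>) (map snd xs) \<Longrightarrow> r \<in> set xs \<Longrightarrow> snd r \<le> snd (hd xs)"
  by (cases xs) auto

lemma sorted_ge_last: fixes xs :: "(real \<times> real) list" shows "sorted_wrt (\<ge>) (map snd xs) \<Longrightarrow> r \<in> set xs \<Longrightarrow> snd (last xs) \<le> snd r"
proof (induction xs)
  case Nil then show ?case by simp
next
  case (Cons x xs)
  show ?case
  proof (cases "xs = []")
    case True then show ?thesis using Cons by simp
  next
    case False
    then have "last xs \<in> set xs" by simp
    then show ?thesis using Cons False by auto
  qed
qed

lemma sgn_update: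
  assumes "k < length cs" "sgn c' = sgn (cs!k)"
  shows "list_all2 (\<lambda>a b. sgn a = sgn b) (cs[k := c']) cs"
  using assms by (auto simp: list_all2_conv_all_nth nth_list_update)

lemma perturb:
  assumes srt: "sorted_wrt (\<ge>) (map snd xs)" and k: "k < length xs" and c0: "fst (xs!k) \<noteq> 0"
  shows "\<exists>h. h 0 = 0 \<and> (\<forall>t>0. h t > 0) \<and> (\<forall>\<epsilon>. 0 < \<epsilon> \<longrightarrow> \<epsilon> < \<bar>fst (xs!k)\<bar> \<longrightarrow>
     (\<exists>ys. sorted_wrt (\<ge>) (map snd ys) \<and> (\<forall>t. ef ys t = ef xs t + \<epsilon> * h t) \<and>
        vc 0 (map fst ys) \<le> vc 0 (map fst xs) + 1 \<and>
        (even (vc 0 (map fst xs)) \<longrightarrow> vc 0 (map fst ys) \<le> vc 0 (map fst xs))))"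
proof -
  define c where "c = fst (xs!k)"
  define \<mu> where "\<mu> = snd (xs!k)"
  define cs where "cs = map fst xs"
  define V where "V = vc 0 cs"
  define L where "L = lastnz 0 cs"
  have kc: "k < length cs" using k cs_def by simp
  have csk: "cs!k = c" using k cs_def c_def by simp
  have xk: "xs!k \<in> set xs" using k by simp
  have sgn_eps: "sgn (c + e) = sgn c" "sgn (c - e) = sgn c" if "0 < e" "e < \<bar>c\<bar>" for e
    using that c0 c_def by (auto simp: sgn_if)
  have upd_snd: "map snd (xs[k := (d, \<mu>)]) = map snd xs" for d
    using k \<mu>_def by (simp add: map_update) (metis list_update_id nth_map)
  have upd_fst: "map fst (xs[k := (d, \<mu>)]) = cs[k := d]" for d
    using cs_def by (simp add: map_update)
  show ?thesis
  proof (cases "L \<le> 0")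
    case True
    define m0 where "m0 = snd (last xs) - 1"
    have m0lt: "m0 < \<mu>" using sorted_ge_last[OF srt xk] m0_def \<mu>_def by simp
    show ?thesis
    proof (intro exI[of _ "\<lambda>t. exp (\<mu> * t) - exp (m0 * t)"] conjI allI impI)
      show "exp (\<mu> * 0) - exp (m0 * 0) = 0" by simp
      fix t :: real assume "t > 0"
      then show "exp (\<mu> * t) - exp (m0 * t) > 0" using m0lt by simp
    next
      fix \<epsilon> :: real assume e: "0 < \<epsilon>" "\<epsilon> < \<bar>fst (xs!k)\<bar>"
      define ys where "ys = xs[k := (c + \<epsilon>, \<mu>)] @ [(- \<epsilon>, m0)]"
      show "\<exists>ys. sorted_wrt (\<ge>) (map snd ys) \<and> (\<forall>t. ef ys t = ef xs t + \<epsilon> * (exp (\<mu> * t) - exp (m0 * t))) \<and>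
        vc 0 (map fst ys) \<le> vc 0 (map fst xs) + 1 \<and>
        (even (vc 0 (map fst xs)) \<longrightarrow> vc 0 (map fst ys) \<le> vc 0 (map fst xs))"
      proof (intro exI[of _ ys] conjI allI impI)
        have "\<forall>r\<in>set xs. m0 \<le> snd r" using sorted_ge_last[OF srt] m0_def by force
        then show "sorted_wrt (\<ge>) (map snd ys)" using srt
          unfolding ys_def by (simp add: upd_snd sorted_wrt_append)
        fix t
        show "ef ys t = ef xs t + \<epsilon> * (exp (\<mu> * t) - exp (m0 * t))"
          unfolding ys_def using k c_def \<mu>_def by (simp add: ef_update algebra_simps)
      next
        have la: "list_all2 (\<lambda>a b. sgn a = sgn b) (cs[k := c + \<epsilon>]) cs"
          by (rule sgn_update[OF kc]) (use sgn_eps e c_def csk in auto)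
        have sL: "sgn (lastnz 0 (cs[k := c + \<epsilon>])) = sgn L"
          using lastnz_sgn[OF la] L_def by simp
        have v1: "vc 0 (cs[k := c + \<epsilon>]) = V" using vc_sgn[OF la] V_def by simp
        have v2: "vc (lastnz 0 (cs[k := c + \<epsilon>])) [- \<epsilon>] = 0"
        proof -
          have "\<not> lastnz 0 (cs[k := c + \<epsilon>]) * (- \<epsilon>) < 0"
          proof
            assume a: "lastnz 0 (cs[k := c + \<epsilon>]) * (- \<epsilon>) < 0"
            then have "lastnz 0 (cs[k := c + \<epsilon>]) > 0" using e by (simp add: zero_less_mult_iff)
            then have "sgn L = 1" using sL by simp
            then show False using True by (simp add: sgn_if split: if_splits)
          qed
          then show ?thesis using e by simp
        qed
        have "vc 0 (map fst ys) = V"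
          unfolding ys_def using upd_fst v1 v2 by (simp add: vc_append)
        then show "vc 0 (map fst ys) \<le> vc 0 (map fst xs) + 1"
          "vc 0 (map fst ys) \<le> vc 0 (map fst xs)" using V_def cs_def by auto
      qed
    qed
  next
    case False
    define M where "M = snd (hd xs) + 1"
    have Mgt: "\<forall>r\<in>set xs. snd r < M" using sorted_le_hd[OF srt] M_def by force
    have muM: "\<mu> < M" using Mgt xk \<mu>_def by simp
    show ?thesis
    proof (intro exI[of _ "\<lambda>t. exp (M * t) - exp (\<mu> * t)"] conjI allI impI)
      show "exp (M * 0) - exp (\<mu> * 0) = 0" by simp
      fix t :: real assume "t > 0"
      then show "exp (M * t) - exp (\<mu> * t) > 0" using muM by simp
    next
      fix \<epsilon> :: real assume e: "0 < \<epsilon>" "\<epsilon> < \<bar>fst (xs!k)\<bar>"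
      define ys where "ys = (\<epsilon>, M) # xs[k := (c - \<epsilon>, \<mu>)]"
      show "\<exists>ys. sorted_wrt (\<ge>) (map snd ys) \<and> (\<forall>t. ef ys t = ef xs t + \<epsilon> * (exp (M * t) - exp (\<mu> * t))) \<and>
        vc 0 (map fst ys) \<le> vc 0 (map fst xs) + 1 \<and>
        (even (vc 0 (map fst xs)) \<longrightarrow> vc 0 (map fst ys) \<le> vc 0 (map fst xs))"
      proof (intro exI[of _ ys] conjI allI impI)
        show "sorted_wrt (\<ge>) (map snd ys)" using srt Mgt
          unfolding ys_def by (auto simp: upd_snd less_imp_le)
        fix t
        show "ef ys t = ef xs t + \<epsilon> * (exp (M * t) - exp (\<mu> * t))"
          unfolding ys_def using k c_def \<mu>_def by (simp add: ef_update algebra_simps)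
      next
        have la: "list_all2 (\<lambda>a b. sgn a = sgn b) (cs[k := c - \<epsilon>]) cs"
          by (rule sgn_update[OF kc]) (use sgn_eps e c_def csk in auto)
        have v1: "vc 0 (map fst ys) = vc 1 cs"
          unfolding ys_def using upd_fst vc_sgn[OF la, of \<epsilon> 1] e by simp
        have lo: "V \<le> vc 1 cs" using vc_state0 V_def by simp
        have hi: "vc 1 cs \<le> V + 1" using vc_le0 V_def by simp
        show "vc 0 (map fst ys) \<le> vc 0 (map fst xs) + 1" using v1 hi V_def cs_def by simp
        assume ev: "even (vc 0 (map fst xs))"
        have ex: "\<exists>x\<in>set cs. x \<noteq> 0" using kc csk c0 c_def by (metis nth_mem)
        have "lastnz 1 cs = L" using lastnz_indep[OF ex] L_def by simp
        then have "even (vc 1 cs)" using vc_parity[of 1 cs] False by simp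
        moreover have "vc 1 cs = V \<or> vc 1 cs = V + 1" using lo hi by linarith
        moreover have "even V" using ev V_def cs_def by simp
        ultimately have "vc 1 cs = V" by auto
        then show "vc 0 (map fst ys) \<le> vc 0 (map fst xs)" using v1 V_def cs_def by simp
      qed
    qed
  qed
qed



lemma sum_delta_mult: "(\<Sum>k'<(n::nat). g k' * (if k' = k then 1 else 0)) = (if k < n then g k else (0::real))"
proof -
  have "(\<Sum>k'<n. g k' * (if k' = k then 1 else 0)) = (\<Sum>k'<n. if k' = k then g k' else 0)"
    by (rule sum.cong) auto
  also have "\<dots> = (if k < n then g k else 0)" by (simp add: sum.delta)
  finally show ?thesis .
qed

lemma eigen:
  assumes orth: "orthogonal_matrix n U"
    and decomp: "\<forall>a<n. \<forall>b<n. A a b = (\<Sum>k<n. U a k * lam k * U b k)"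
    and a: "a < n" and k: "k < n"
  shows "(\<Sum>l<n. A a l * U l k) = U a k * lam k"
proof -
  have Adef: "\<And>l. l < n \<Longrightarrow> A a l = (\<Sum>k'<n. U a k' * lam k' * U l k')" using decomp a by blast
  have "(\<Sum>l<n. A a l * U l k) = (\<Sum>l<n. \<Sum>k'<n. U a k' * lam k' * (U l k' * U l k))"
    by (rule sum.cong[OF refl]) (simp add: Adef sum_distrib_right mult.assoc)
  also have "\<dots> = (\<Sum>k'<n. U a k' * lam k' * (\<Sum>l<n. U l k' * U l k))"
    by (subst sum.swap) (simp add: sum_distrib_left)
  also have "\<dots> = (\<Sum>k'<n. U a k' * lam k' * (if k' = k then 1 else 0))"
    by (rule sum.cong) (use orth k in \<open>auto simp: orthogonal_matrix_def\<close>)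
  also have "\<dots> = U a k * lam k" using k by (simp add: sum_delta_mult)
  finally show ?thesis .
qed

lemma lam_pos:
  assumes dnn: "doubly_nonnegative n A" and inv: "invertible_matrix n A"
    and orth: "orthogonal_matrix n U"
    and decomp: "\<forall>a<n. \<forall>b<n. A a b = (\<Sum>k<n. U a k * lam k * U b k)"
    and k: "k < n"
  shows "lam k > 0"
proof -
  have E: "\<And>a. a < n \<Longrightarrow> (\<Sum>l<n. A a l * U l k) = U a k * lam k" using eigen[OF orth decomp _ k] by blast
  have norm: "(\<Sum>a<n. U a k * U a k) = 1" using orth k by (simp add: orthogonal_matrix_def)
  have psd: "(\<Sum>a<n. \<Sum>b<n. U a k * A a b * U b k) \<ge> 0"
    using dnn by (simp add: doubly_nonnegative_def psd_matrix_def)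
  have "(\<Sum>a<n. \<Sum>b<n. U a k * A a b * U b k) = (\<Sum>a<n. U a k * (\<Sum>b<n. A a b * U b k))"
    by (simp add: sum_distrib_left mult.assoc)
  also have "\<dots> = (\<Sum>a<n. U a k * (U a k * lam k))" by (rule sum.cong) (auto simp: E)
  also have "\<dots> = lam k * (\<Sum>a<n. U a k * U a k)" by (simp add: sum_distrib_left algebra_simps)
  also have "\<dots> = lam k" using norm by simp
  finally have ge: "lam k \<ge> 0" using psd by simp
  have "lam k \<noteq> 0"
  proof
    assume l0: "lam k = 0"
    obtain B where B: "\<forall>i<n. \<forall>j<n. mat_mult n B A i j = (if i = j then 1 else 0)"
      using inv unfolding invertible_matrix_def by blast
    have "U c k = 0" if c: "c < n" for c
    proof -
      have "U c k = (\<Sum>b<n. (if b = c then U b k else 0))"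
        using c by (simp add: sum.delta)
      also have "\<dots> = (\<Sum>b<n. (\<Sum>a<n. B c a * A a b) * U b k)"
        by (rule sum.cong) (use B c in \<open>auto simp: mat_mult_def\<close>)
      also have "\<dots> = (\<Sum>a<n. B c a * (\<Sum>b<n. A a b * U b k))"
        by (simp add: sum_distrib_left sum_distrib_right algebra_simps) (rule sum.swap)
      also have "\<dots> = 0" by (rule sum.neutral) (simp add: E l0)
      finally show ?thesis .
    qed
    then have "(\<Sum>a<n. U a k * U a k) = 0" by simp
    then show False using norm by simp
  qed
  then show ?thesis using ge by simp
qed

lemma power_nonneg_entry:
  assumes dnn: "doubly_nonnegative n A"
    and orth: "orthogonal_matrix n U"
    and decomp: "\<forall>a<n. \<forall>b<n. A a b = (\<Sum>k<n. U a k * lam k * U b k)"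
  shows "m \<ge> 1 \<Longrightarrow> a < n \<Longrightarrow> b < n \<Longrightarrow> (\<Sum>k<n. U a k * lam k ^ m * U b k) \<ge> 0"
proof (induction m arbitrary: a b rule: nat_induct_at_least)
  case base
  then show ?case using dnn decomp by (simp add: doubly_nonnegative_def entrywise_nonneg_def)
next
  case (Suc m)
  have "(\<Sum>k<n. U a k * lam k ^ Suc m * U b k) = (\<Sum>k<n. (U a k * lam k) * lam k ^ m * U b k)"
    by (simp add: algebra_simps)
  also have "\<dots> = (\<Sum>k<n. (\<Sum>l<n. A a l * U l k) * lam k ^ m * U b k)"
    by (rule sum.cong) (use eigen[OF orth decomp Suc.prems(1)] in auto)
  also have "\<dots> = (\<Sum>l<n. A a l * (\<Sum>k<n. U l k * lam k ^ m * U b k))"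
    by (simp add: sum_distrib_left sum_distrib_right algebra_simps) (rule sum.swap)
  also have "\<dots> \<ge> 0"
    by (rule sum_nonneg) (use Suc dnn in \<open>auto simp: doubly_nonnegative_def entrywise_nonneg_def\<close>)
  finally show ?case .
qed



lemma comp_sep:
  fixes S :: "real set"
  assumes C: "C \<in> components S" and C': "C' \<in> components S" and ne: "C \<noteq> C'"
    and p: "p \<in> C" and q: "q \<in> C'" and pq: "p < q"
  shows "\<exists>r. p < r \<and> r < q \<and> r \<notin> S"
proof (rule ccontr)
  assume a: "\<not> (\<exists>r. p < r \<and> r < q \<and> r \<notin> S)"
  have pS: "p \<in> S" using p C in_components_subset by blast
  have qS: "q \<in> S" using q C' in_components_subset by blast
  have sub: "{p..q} \<subseteq> S"
  proof
    fix x assume x: "x \<in> {p..q}"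
    show "x \<in> S"
    proof (cases "x = p \<or> x = q")
      case True then show ?thesis using pS qS by auto
    next
      case False then show ?thesis using a x by auto
    qed
  qed
  have "{p..q} \<subseteq> C"
    by (rule components_maximal[OF C connected_Icc sub]) (use p pq in auto)
  then have "q \<in> C" using pq by auto
  then have "C \<inter> C' \<noteq> {}" using q by auto
  then show False using components_nonoverlap[OF C C'] ne by simp
qed

theorem lemma2p4:
  fixes n :: nat and A U :: "nat \<Rightarrow> nat \<Rightarrow> real" and lam :: "nat \<Rightarrow> real" and i j :: nat
  assumes dnn: "doubly_nonnegative n A"
    and inv: "invertible_matrix n A"
    and orth: "orthogonal_matrix n U"
    and decomp: "\<forall>a<n. \<forall>b<n. A a b = (\<Sum>k<n. U a k * lam k * U b k)"
    and sorted: "\<forall>k l. k \<le> l \<longrightarrow> l < n \<longrightarrow> lam l \<le> lam k"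
    and ij: "i < n" "j < n"
  shows "finite (components {t::real. t > 1 \<and> mat_real_power_entry n U lam t i j < 0}) \<and>
         card (components {t::real. t > 1 \<and> mat_real_power_entry n U lam t i j < 0})
           \<le> (if sign_change_entry n U i j > 0 then (sign_change_entry n U i j - 1) div 2 else 0)"
proof -
  define f where "f t = mat_real_power_entry n U lam t i j" for t
  define S where "S = {t::real. t > 1 \<and> f t < 0}"
  define w where "w = sign_change_entry n U i j"
  define B where "B = (if w > 0 then (w - 1) div 2 else 0)"
  have lp: "\<And>k. k < n \<Longrightarrow> lam k > 0" using lam_pos[OF dnn inv orth decomp] .
  have lnz: "\<And>k. k < n \<Longrightarrow> lam k \<noteq> 0" using lp by force
  define xs where "xs = map (\<lambda>k. (U i k * U j k, ln (lam k))) [0..<n]"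
  have lxs: "length xs = n" by (simp add: xs_def)
  have fsum: "f t = (\<Sum>k<n. U i k * U j k * lam k powr t)" for t
    by (simp add: f_def mat_real_power_entry_def)
  have fx: "f t = ef xs t" for t
  proof -
    have "ef xs t = (\<Sum>k<n. U i k * U j k * exp (ln (lam k) * t))"
      by (simp add: xs_def ef_def interv_sum_list_conv_sum_set_nat atLeast0LessThan o_def)
    also have "\<dots> = (\<Sum>k<n. U i k * U j k * lam k powr t)"
    proof (rule sum.cong[OF refl])
      fix x assume "x \<in> {..<n}"
      then have "lam x \<noteq> 0" using lp by force
      then show "U i x * U j x * exp (ln (lam x) * t) = U i x * U j x * lam x powr t"
        by (simp add: powr_def mult.commute)
    qed
    finally show ?thesis using fsum by simp
  qed
  have srt: "sorted_wrt (\<ge>) (map snd xs)"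
    unfolding sorted_wrt_iff_nth_less
  proof (intro allI impI)
    fix a b assume ab: "a < b" "b < length (map snd xs)"
    then have "lam b \<le> lam a" using sorted lxs by simp
    then show "map snd xs ! b \<le> map snd xs ! a" using ab lxs lp xs_def by simp
  qed
  have wv: "w = vc 0 (map fst xs)"
    by (simp add: w_def vc0 sign_change_entry_def xs_def o_def)
  have f0: "f 0 = (if i = j then 1 else 0)"
  proof -
    have "f 0 = (\<Sum>k<n. U i k * U j k)"
      unfolding fsum by (rule sum.cong) (simp_all add: lnz)
    then show ?thesis using orth ij by (simp add: orthogonal_matrix_def)
  qed
  have fnat: "f (real m) \<ge> 0" if m: "m \<ge> 1" for m :: nat
  proof -
    have "f (real m) = (\<Sum>k<n. U i k * lam k ^ m * U j k)"
      unfolding fsum by (rule sum.cong) (use lp in \<open>auto simp: powr_realpow\<close>)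
    then show ?thesis using power_nonneg_entry[OF dnn orth decomp m ij] by simp
  qed
  have key: "card F \<le> B" if F: "F \<subseteq> components S" "finite F" for F
  proof (cases "card F = 0")
    case True then show ?thesis by simp
  next
    case False
    define m where "m = card F"
    have m1: "m \<ge> 1" using False m_def by simp
    have Sne: "S \<noteq> {}" using F False by auto
    have inej: "i \<noteq> j"
    proof
      assume "i = j"
      then have "f t \<ge> 0" for t unfolding fsum by (intro sum_nonneg) auto
      then have "S = {}" unfolding S_def by (auto simp: not_less)
      then show False using Sne by simp
    qed
    obtain k where k: "k < n" "U i k * U j k \<noteq> 0"
    proof (rule ccontr)
      assume "\<not> thesis"
      then have "\<forall>k<n. U i k * U j k = 0" using that by blast
      then have "f t = 0" for t unfolding fsum by (intro sum.neutral) auto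
      then have "S = {}" unfolding S_def by auto
      then show False using Sne by simp
    qed
    define c where "c = U i k * U j k"
    have xk: "fst (xs!k) = c" using k xs_def c_def by simp
    obtain h where h: "h 0 = 0" "\<forall>t>0. h t > 0"
      and hy: "\<forall>\<epsilon>. 0 < \<epsilon> \<longrightarrow> \<epsilon> < \<bar>c\<bar> \<longrightarrow>
     (\<exists>ys. sorted_wrt (\<ge>) (map snd ys) \<and> (\<forall>t. ef ys t = ef xs t + \<epsilon> * h t) \<and>
        vc 0 (map fst ys) \<le> vc 0 (map fst xs) + 1 \<and>
        (even (vc 0 (map fst xs)) \<longrightarrow> vc 0 (map fst ys) \<le> vc 0 (map fst xs)))"
      using perturb[OF srt, of k] k lxs xk c_def by auto
    define pt where "pt C = (SOME x. x \<in> C)" for C :: "real set"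
    have ptC: "pt C \<in> C" if "C \<in> F" for C
      using F that in_components_nonempty pt_def by (metis some_in_eq subsetD)
    define P where "P = pt ` F"
    have injp: "inj_on pt F"
    proof (rule inj_onI)
      fix C C' assume CC: "C \<in> F" "C' \<in> F" "pt C = pt C'"
      then have "C \<inter> C' \<noteq> {}" using ptC by (metis disjoint_iff)
      then show "C = C'" using components_nonoverlap F CC by blast
    qed
    have cP: "card P = m" using injp P_def m_def card_image by blast
    have fP: "finite P" using F P_def by simp
    have PS: "P \<subseteq> S" using ptC F P_def in_components_subset by blast
    have Pgt: "\<forall>p\<in>P. p > 1" "\<forall>p\<in>P. f p < 0" using PS S_def by auto
    have hP: "\<forall>p\<in>P. h p > 0" using Pgt h by auto
    define \<epsilon> where "\<epsilon> = Min (insert (\<bar>c\<bar>/2) ((\<lambda>p. - f p / (2 * h p)) ` P))"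
    have cpos: "\<bar>c\<bar> > 0" using k c_def by simp
    have epos: "\<epsilon> > 0" unfolding \<epsilon>_def using fP cpos Pgt hP by (auto simp: Min_gr_iff divide_neg_pos)
    have "\<epsilon> \<le> \<bar>c\<bar>/2" unfolding \<epsilon>_def using fP by (intro Min_le) auto
    then have elt: "\<epsilon> < \<bar>c\<bar>" using cpos by linarith
    have ehp: "\<epsilon> * h p < - f p" if p: "p \<in> P" for p
    proof -
      have "\<epsilon> \<le> - f p / (2 * h p)" unfolding \<epsilon>_def using fP p by (auto intro: Min_le)
      have hp: "h p > 0" using hP p by simp
      have "\<epsilon> * h p \<le> - f p / (2 * h p) * h p"
        by (rule mult_right_mono[OF \<open>\<epsilon> \<le> - f p / (2 * h p)\<close> less_imp_le[OF hp]])
      also have "\<dots> = - f p / 2" using hp by (simp add: field_simps)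
      also have "\<dots> < - f p" using Pgt p by simp
      finally show ?thesis .
    qed
    obtain ys where ys: "sorted_wrt (\<ge>) (map snd ys)" "\<forall>t. ef ys t = ef xs t + \<epsilon> * h t"
        "vc 0 (map fst ys) \<le> vc 0 (map fst xs) + 1"
        "even (vc 0 (map fst xs)) \<longrightarrow> vc 0 (map fst ys) \<le> vc 0 (map fst xs)"
      using hy epos elt by blast
    define g where "g = ef ys"
    have gf: "g t = f t + \<epsilon> * h t" for t using ys(2) fx g_def by simp
    have gpos: "g t > 0" if "t > 1" "t \<notin> S" for t
    proof -
      have "f t \<ge> 0" using that S_def by auto
      moreover have "\<epsilon> * h t > 0" using epos h that by simp
      ultimately show ?thesis using gf by simp
    qed
    define K where "K = real (nat \<lceil>Max P\<rceil> + 1)"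
    have PK: "\<forall>p\<in>P. p < K"
    proof
      fix p assume "p \<in> P"
      then have "p \<le> Max P" using fP by simp
      also have "\<dots> \<le> real (nat \<lceil>Max P\<rceil>)" by linarith
      finally show "p < K" unfolding K_def by simp
    qed
    have gK: "g K > 0"
    proof -
      have "f K \<ge> 0" unfolding K_def by (rule fnat) simp
      moreover have "\<epsilon> * h K > 0" using epos h K_def by simp
      ultimately show ?thesis using gf by simp
    qed
    have g1: "g 1 > 0"
    proof -
      have "f 1 \<ge> 0" using fnat[of 1] by simp
      moreover have "\<epsilon> * h 1 > 0" using epos h by simp
      ultimately show ?thesis using gf by simp
    qed
    have sep: "\<forall>p\<in>P. \<forall>q\<in>P. p < q \<longrightarrow> (\<exists>r. p < r \<and> r < q \<and> g r > 0)"
    proof (intro ballI impI)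
      fix p q assume pq: "p \<in> P" "q \<in> P" "p < q"
      obtain C C' where CC: "C \<in> F" "C' \<in> F" "p = pt C" "q = pt C'" using pq P_def by auto
      have "C \<noteq> C'" using CC pq by auto
      then obtain r where r: "p < r" "r < q" "r \<notin> S"
        using comp_sep[of C S C' p q] CC F ptC pq by blast
      have "r > 1" using r Pgt pq by force
      then show "\<exists>r. p < r \<and> r < q \<and> g r > 0" using r gpos by blast
    qed
    obtain Z where Z: "finite Z" "card Z = 2*m" "Z \<subseteq> {1<..<K}" "\<forall>z\<in>Z. g z = 0"
    proof -
      have gc: "continuous_on UNIV g" unfolding g_def by (rule ef_cont)
      have gneg: "\<forall>p\<in>P. g p < 0" using ehp gf by force
      show ?thesis using alt_zeros[OF gc fP cP gneg Pgt(1) g1 sep PK gK] that by blast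
    qed
    have g0: "g 0 = 0" using gf f0 h inej by simp
    have "0 \<notin> Z" using Z(3) by auto
    then have cZ: "card (insert 0 Z) = 2*m + 1" using Z by simp
    have "\<not> vc 0 (map fst ys) < card (insert 0 Z)"
    proof
      assume "vc 0 (map fst ys) < card (insert 0 Z)"
      moreover have zz: "\<forall>z\<in>insert 0 Z. ef ys z = 0" using Z(4) g0 g_def by auto
      moreover have "finite (insert 0 Z)" using Z(1) by simp
      ultimately have "ef ys 1 = 0" using descartes[OF ys(1)] by blast
      then show False using g1 g_def by simp
    qed
    then have a1: "2*m + 1 \<le> vc 0 (map fst ys)" using cZ by simp
    have "2*m + 1 \<le> w"
    proof (cases "even w")
      case True
      then have "vc 0 (map fst ys) \<le> w" using ys(4) wv by simp
      then show ?thesis using a1 by simp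
    next
      case False
      have "vc 0 (map fst ys) \<le> w + 1" using ys(3) wv by simp
      then have "2*m \<le> w" using a1 by simp
      then show ?thesis using False by presburger
    qed
    then show ?thesis unfolding B_def using m_def by auto
  qed
  have fin: "finite (components S)"
  proof (rule ccontr)
    assume "infinite (components S)"
    then obtain F where F: "finite F" "card F = Suc B" "F \<subseteq> components S"
      using infinite_arbitrarily_large by blast
    have "card F \<le> B" by (rule key[OF F(3) F(1)])
    then show False using F(2) by simp
  qed
  show ?thesis using fin key[OF subset_refl fin] unfolding S_def f_def B_def w_def by simp
qed


end
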